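(* Let $\mathfrak g$ be a finite-dimensional Lie algebra over a field $k$ of characteristic zero and let $(A,\cdot)$ be an LR-structure on $\mathfrak g$. Consider the statements: (a) all left multiplications $L(x)$, $x\in A$, are nilpotent; (b) all right multiplications $R(x)$, $x\in A$, are nilpotent; (c) $\mathfrak g$ is nilpotent. Then any two of (a), (b), (c) imply the third.
   Context: An LR-algebra is a vector space $A$ with a bilinear product $\cdot$ satisfying $x\cdot(y\cdot z)=y\cdot(x\cdot z)$ and $(x\cdot y)\cdot z=(x\cdot z)\cdot y$ for all $x,y,z\in A$. An LR-structure on a Lie algebra $\mathfrak g$ is an LR-algebra product $\cdot$ on the underlying vector space $A$ of $\mathfrak g$ such that $x\cdot y-y\cdot x=[x,y]$ for all $x,y$. $L(x)y=x\cdot y$ and $R(x)y=y\cdot x$. *)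

theory Defs
  imports Complex_Main
begin

definition is_LR_product :: "('k::field \<Rightarrow> 'v::ab_group_add \<Rightarrow> 'v) \<Rightarrow> ('v \<Rightarrow> 'v \<Rightarrow> 'v) \<Rightarrow> bool" where
  "is_LR_product scale p \<longleftrightarrow>
     (\<forall>x. Vector_Spaces.linear scale scale (p x)) \<and>
     (\<forall>y. Vector_Spaces.linear scale scale (\<lambda>x. p x y)) \<and>
     (\<forall>x y z. p x (p y z) = p y (p x z)) \<and>
     (\<forall>x y z. p (p x y) z = p (p x z) y)"


fun lower_central :: "('k::field \<Rightarrow> 'v::ab_group_add \<Rightarrow> 'v) \<Rightarrow> ('v \<Rightarrow> 'v \<Rightarrow> 'v) \<Rightarrow> nat \<Rightarrow> 'v set" where
  "lower_central scale br 0 = UNIV"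
| "lower_central scale br (Suc n) =
     module.span scale {br x y | x y. y \<in> lower_central scale br n}"

definition lie_nilpotent :: "('k::field \<Rightarrow> 'v::ab_group_add \<Rightarrow> 'v) \<Rightarrow> ('v \<Rightarrow> 'v \<Rightarrow> 'v) \<Rightarrow> bool" where
  "lie_nilpotent scale br \<longleftrightarrow> (\<exists>n. lower_central scale br n = {0})"

definition nilpotent_map :: "('v::zero \<Rightarrow> 'v) \<Rightarrow> bool" where
  "nilpotent_map f \<longleftrightarrow> (\<exists>n. (f ^^ n) = (\<lambda>_. 0))"

end

theory Submission
  imports Defs
begin

lemma funpow_comm_comp:
  assumes "g \<circ> f = f \<circ> g" shows "g \<circ> (f ^^ n) = (f ^^ n) \<circ> g"
proof (induction n)
  case 0 then show ?case by simp
next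
  case (Suc n)
  have "g \<circ> (f ^^ Suc n) = (g \<circ> f) \<circ> f ^^ n" by (simp add: comp_assoc)
  also have "\<dots> = f \<circ> (g \<circ> f ^^ n)" using assms by (simp add: comp_assoc)
  also have "\<dots> = f \<circ> ((f ^^ n) \<circ> g)" by (simp only: Suc)
  also have "\<dots> = (f ^^ Suc n) \<circ> g" by (simp only: funpow.simps comp_assoc)
  finally show ?case .
qed

lemma comp_count:
  assumes "\<forall>g\<in>set fs. g \<circ> f = f \<circ> g"
  shows "foldr (\<circ>) fs id = (f ^^ length (filter (\<lambda>g. g = f) fs)) \<circ> foldr (\<circ>) (filter (\<lambda>g. g \<noteq> f) fs) id"
  using assms
proof (induction fs)
  case Nil then show ?case by simp
next
  case (Cons g gs)
  show ?case
  proof (cases "g = f")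
    case True
    then show ?thesis using Cons by (simp add: comp_assoc)
  next
    case False
    have c: "g \<circ> (f ^^ length (filter (\<lambda>g. g = f) gs)) = (f ^^ length (filter (\<lambda>g. g = f) gs)) \<circ> g"
      by (rule funpow_comm_comp, rule bspec[OF Cons.prems]) simp
    have ih: "foldr (\<circ>) gs id = (f ^^ length (filter (\<lambda>g. g = f) gs)) \<circ> foldr (\<circ>) (filter (\<lambda>g. g \<noteq> f) gs) id"
      by (rule Cons.IH) (use Cons.prems in auto)
    have "foldr (\<circ>) (g # gs) id = g \<circ> foldr (\<circ>) gs id" by simp
    also have "\<dots> = (g \<circ> (f ^^ length (filter (\<lambda>g. g = f) gs))) \<circ> foldr (\<circ>) (filter (\<lambda>g. g \<noteq> f) gs) id"
      by (simp only: ih comp_assoc)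
    also have "\<dots> = (f ^^ length (filter (\<lambda>g. g = f) gs)) \<circ> (g \<circ> foldr (\<circ>) (filter (\<lambda>g. g \<noteq> f) gs) id)"
      using c by (simp add: comp_assoc)
    finally have fin: "foldr (\<circ>) (g # gs) id = (f ^^ length (filter (\<lambda>g. g = f) gs)) \<circ> (g \<circ> foldr (\<circ>) (filter (\<lambda>g. g \<noteq> f) gs) id)" .
    have e1: "filter (\<lambda>g. g \<noteq> f) (g#gs) = g # filter (\<lambda>g. g \<noteq> f) gs"
      and e2: "filter (\<lambda>g. g = f) (g#gs) = filter (\<lambda>g. g = f) gs" using False by auto
    have e3: "foldr (\<circ>) (g # r) id = g \<circ> foldr (\<circ>) r id" for r :: "('a \<Rightarrow> 'a) list" by simp
    show ?thesis using fin by (simp only: e1 e2 e3)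
  qed
qed

lemma funpow_zero_ge:
  fixes f :: "'v::zero \<Rightarrow> 'v"
  assumes "f ^^ e = (\<lambda>_. 0)" "f 0 = 0" "e \<le> k"
  shows "f ^^ k = (\<lambda>_. 0)"
proof -
  have fz: "(f ^^ m) 0 = 0" for m by (induction m) (auto simp: assms(2))
  have "f ^^ k = (f ^^ (k - e)) \<circ> (f ^^ e)" using assms(3) by (simp add: funpow_add[symmetric])
  then show ?thesis using assms(1) fz by (auto simp: fun_eq_iff)
qed

lemma commuting_nilpotent_bound:
  fixes FF :: "('v::zero \<Rightarrow> 'v) set"
  assumes "finite FF"
    and "\<forall>f\<in>FF. \<exists>e. f ^^ e = (\<lambda>_. 0)"
    and "\<forall>f\<in>FF. \<forall>g\<in>FF. g \<circ> f = f \<circ> g"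
    and "\<forall>f\<in>FF. f 0 = 0"
  shows "\<exists>K. \<forall>fs. set fs \<subseteq> FF \<longrightarrow> K \<le> length fs \<longrightarrow> foldr (\<circ>) fs id = (\<lambda>_. 0)"
  using assms
proof (induction FF rule: finite_induct)
  case empty
  show ?case by (rule exI[of _ 1]) auto
next
  case (insert f G)
  have "\<exists>K. \<forall>fs. set fs \<subseteq> G \<longrightarrow> K \<le> length fs \<longrightarrow> foldr (\<circ>) fs id = (\<lambda>_. 0)"
    apply (rule insert.IH) using insert.prems by blast+
  then obtain K where K: "\<forall>fs. set fs \<subseteq> G \<longrightarrow> K \<le> length fs \<longrightarrow> foldr (\<circ>) fs id = (\<lambda>_. 0)"
    by blast
  obtain e where e: "f ^^ e = (\<lambda>_. 0)" using insert.prems by auto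
  have f0: "f 0 = 0" using insert.prems by auto
  have fz: "(f ^^ m) 0 = 0" for m by (induction m) (auto simp: f0)
  show ?case
  proof (rule exI[of _ "K + e"], intro allI impI)
    fix fs assume s: "set fs \<subseteq> insert f G" and l: "K + e \<le> length fs"
    let ?k = "length (filter (\<lambda>g. g = f) fs)"
    let ?r = "filter (\<lambda>g. g \<noteq> f) fs"
    have "foldr (\<circ>) fs id = (f ^^ ?k) \<circ> foldr (\<circ>) ?r id"
      by (rule comp_count) (use s insert.prems in blast)
    moreover have "(f ^^ ?k) \<circ> foldr (\<circ>) ?r id = (\<lambda>_. 0)"
    proof (cases "e \<le> ?k")
      case True
      then have "f ^^ ?k = (\<lambda>_. 0)" using funpow_zero_ge[OF e f0] by blast
      then show ?thesis by (simp add: fun_eq_iff)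
    next
      case False
      have "length ?r + ?k = length fs"
        using sum_length_filter_compl[of "\<lambda>g. g = f" fs] by simp
      then have "K \<le> length ?r" using l False by linarith
      moreover have "set ?r \<subseteq> G" using s by auto
      ultimately have "foldr (\<circ>) ?r id = (\<lambda>_. 0)" using K by blast
      then show ?thesis using fz by (simp add: fun_eq_iff)
    qed
    ultimately show "foldr (\<circ>) fs id = (\<lambda>_. 0)" by simp
  qed
qed

fun iter_img :: "('k::field \<Rightarrow> 'v::ab_group_add \<Rightarrow> 'v) \<Rightarrow> ('v \<Rightarrow> 'v \<Rightarrow> 'v) \<Rightarrow> nat \<Rightarrow> 'v set" where
  "iter_img scale F 0 = UNIV"
| "iter_img scale F (Suc n) = module.span scale {F x w | x w. w \<in> iter_img scale F n}"

context finite_dimensional_vector_space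
begin

lemma iter_img_bound:
  fixes F :: "'b \<Rightarrow> 'b \<Rightarrow> 'b"
  assumes lin1: "\<forall>x. Vector_Spaces.linear scale scale (F x)"
    and lin2: "\<forall>u. Vector_Spaces.linear scale scale (\<lambda>x. F x u)"
    and comm: "\<forall>x y. F x \<circ> F y = F y \<circ> F x"
    and nil: "\<forall>x. nilpotent_map (F x)"
  shows "\<exists>N. \<forall>n\<ge>N. iter_img scale F n = {0}"
proof -
  let ?FF = "F ` Basis"
  have "\<exists>K. \<forall>fs. set fs \<subseteq> ?FF \<longrightarrow> K \<le> length fs \<longrightarrow> foldr (\<circ>) fs id = (\<lambda>_. 0)"
  proof (rule commuting_nilpotent_bound)
    show "finite ?FF" using finite_Basis by simp
    show "\<forall>f\<in>?FF. \<exists>e. f ^^ e = (\<lambda>_. 0)" using nil unfolding nilpotent_map_def by auto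
    show "\<forall>f\<in>?FF. \<forall>g\<in>?FF. g \<circ> f = f \<circ> g" using comm by auto
    show "\<forall>f\<in>?FF. f 0 = 0" using lin1 module_hom.zero[of scale scale] module_hom_iff_linear by blast
  qed
  then obtain K where K: "\<forall>fs. set fs \<subseteq> ?FF \<longrightarrow> K \<le> length fs \<longrightarrow> foldr (\<circ>) fs id = (\<lambda>_. 0)" by blast
  define S where "S n = {foldr (\<circ>) fs id v | fs v. set fs \<subseteq> ?FF \<and> length fs = n}" for n
  have incl: "iter_img scale F n \<subseteq> span (S n)" for n
  proof (induction n)
    case 0
    have "v \<in> S 0" for v unfolding S_def by (rule CollectI, rule exI[of _ "[]"]) auto
    then show ?case using span_base by auto
  next
    case (Suc n)
    have gen: "F x u \<in> span (S (Suc n))" if "u \<in> S n" for x u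
    proof -
      obtain fs v where u: "u = foldr (\<circ>) fs id v" "set fs \<subseteq> ?FF" "length fs = n"
        using \<open>u \<in> S n\<close> unfolding S_def by blast
      have mh: "module_hom scale scale (\<lambda>x. F x u)" using lin2 module_hom_iff_linear by blast
      have "F x u \<in> (\<lambda>x. F x u) ` span Basis" using span_Basis by simp
      also have "\<dots> = span ((\<lambda>x. F x u) ` Basis)" using module_hom.span_image[OF mh] by simp
      also have "\<dots> \<subseteq> span (S (Suc n))"
      proof (rule span_mono, rule image_subsetI)
        fix b assume "b \<in> Basis"
        then show "F b u \<in> S (Suc n)" unfolding S_def
          by (intro CollectI exI[of _ "F b # fs"] exI[of _ v]) (use u in auto)
      qed
      finally show ?thesis .
    qed
    have "{F x w | x w. w \<in> iter_img scale F n} \<subseteq> span (S (Suc n))"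
    proof clarify
      fix x w assume "w \<in> iter_img scale F n"
      then have w: "w \<in> span (S n)" using Suc by blast
      have mh: "module_hom scale scale (F x)" using lin1 module_hom_iff_linear by blast
      have "F x w \<in> F x ` span (S n)" using w by simp
      also have "\<dots> = span (F x ` S n)" using module_hom.span_image[OF mh] by simp
      also have "\<dots> \<subseteq> span (S (Suc n))"
        by (rule span_minimal) (use gen in auto)
      finally show "F x w \<in> span (S (Suc n))" .
    qed
    then show ?case by (simp add: span_minimal)
  qed
  show ?thesis
  proof (rule exI[of _ "Suc K"], intro allI impI)
    fix n assume n: "Suc K \<le> n"
    have "S n \<subseteq> {0}" unfolding S_def using K n by auto
    then have "span (S n) \<subseteq> {0}" using span_minimal subspace_single_0 by blast
    moreover obtain m where "n = Suc m" using n by (cases n) auto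
    ultimately show "iter_img scale F n = {0}" using incl[of n] span_zero by auto
  qed
qed


end

context finite_dimensional_vector_space
begin

lemma lc_subspace: "subspace (lower_central scale br k)"
  by (cases k) auto

lemma lc_mono: "lower_central scale br (Suc k) \<subseteq> lower_central scale br k"
proof (induction k)
  case 0 then show ?case by simp
next
  case (Suc k)
  show ?case
    apply (rule ord_eq_le_trans[OF lower_central.simps(2)])
    apply (rule ord_le_eq_trans[OF _ lower_central.simps(2)[symmetric]])
    apply (rule span_mono) using Suc by blast
qed

lemma lc_ad: assumes "w \<in> lower_central scale br k" shows "br x w \<in> lower_central scale br (Suc k)"
  unfolding lower_central.simps(2) using assms by (intro span_base) blast

context
  fixes p :: "'b \<Rightarrow> 'b \<Rightarrow> 'b"
  assumes LR: "is_LR_product scale p"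
begin

lemma hL: "module_hom scale scale (p x)"
  using LR module_hom_iff_linear unfolding is_LR_product_def by blast
lemma hR: "module_hom scale scale (\<lambda>x. p x y)"
  using LR module_hom_iff_linear unfolding is_LR_product_def by blast
lemma lid: "p x (p y z) = p y (p x z)"
  using LR unfolding is_LR_product_def by blast
lemma rid: "p (p x y) z = p (p x z) y"
  using LR unfolding is_LR_product_def by blast

abbreviation "G \<equiv> lower_central scale (\<lambda>x y. p x y - p y x)"

lemma lc_invL: "w \<in> G k \<Longrightarrow> p x w \<in> G k"
proof (induction k arbitrary: x w)
  case 0 then show ?case by simp
next
  case (Suc k)
  let ?Gen = "{p a b - p b a | a b. b \<in> G k}"
  have "p x ` ?Gen \<subseteq> G (Suc k)"
  proof clarify
    fix y u assume u: "u \<in> G k"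
    have "p x (p y u - p u y) = p x (p y u) - p x (p u y)" by (rule module_hom.diff[OF hL])
    also have "\<dots> = p y (p x u) - p u (p x y)" by (simp only: lid[of x y u] lid[of x u y])
    also have "\<dots> = (p y (p x u) - p (p x u) y) + (p (p x y) u - p u (p x y))"
      by (simp only: rid[of x y u]) simp
    finally have "p x (p y u - p u y) = (p y (p x u) - p (p x u) y) + (p (p x y) u - p u (p x y))" .
    moreover have a: "p y (p x u) - p (p x u) y \<in> G (Suc k)" using Suc.IH[OF u] by (rule lc_ad)
    moreover have b: "p (p x y) u - p u (p x y) \<in> G (Suc k)" using u by (rule lc_ad)
    ultimately show "p x (p y u - p u y) \<in> G (Suc k)" using subspace_add[OF lc_subspace a b] by (simp only:)
  qed
  then have "span (p x ` ?Gen) \<subseteq> G (Suc k)" by (rule span_minimal[OF _ lc_subspace])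
  moreover have "p x w \<in> span (p x ` ?Gen)"
  proof -
    have "w \<in> span ?Gen" using Suc.prems by simp
    then have "p x w \<in> p x ` span ?Gen" by blast
    then show ?thesis using module_hom.span_image[OF hL, of x ?Gen] by simp
  qed
  ultimately show ?case by blast
qed

lemma lc_invR: "w \<in> G k \<Longrightarrow> p w x \<in> G k"
proof -
  assume w: "w \<in> G k"
  have e: "p w x = p x w - (p x w - p w x)" by simp
  have a: "p x w \<in> G k" using w by (rule lc_invL)
  have b: "p x w - p w x \<in> G k" using lc_ad[OF w] lc_mono by blast
  show ?thesis using subspace_diff[OF lc_subspace a b] e by (simp only:)
qed

lemma transfer_diff:
  assumes hf: "module_hom scale scale f"
    and invf: "\<And>k w. w \<in> G k \<Longrightarrow> f w \<in> G k"
    and invh: "\<And>k w. w \<in> G k \<Longrightarrow> h w \<in> G k"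
    and df: "\<And>k w. w \<in> G k \<Longrightarrow> f w - h w \<in> G (Suc k)"
    and w: "w \<in> G k"
  shows "(f ^^ m) w - (h ^^ m) w \<in> G (Suc k)"
proof (induction m)
  case 0 then show ?case using lc_subspace subspace_0 by simp
next
  case (Suc m)
  have hm: "(h ^^ m) w \<in> G k" by (induction m) (auto simp: w invh)
  have "(f ^^ Suc m) w - (h ^^ Suc m) w = f ((f ^^ m) w - (h ^^ m) w) + (f ((h ^^ m) w) - h ((h ^^ m) w))"
    by (simp only: funpow.simps comp_apply module_hom.diff[OF hf]) (simp add: algebra_simps)
  moreover have a: "f ((f ^^ m) w - (h ^^ m) w) \<in> G (Suc k)" using invf[OF Suc.IH] .
  moreover have b: "f ((h ^^ m) w) - h ((h ^^ m) w) \<in> G (Suc k)" using df[OF hm] .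
  ultimately show ?case using subspace_add[OF lc_subspace a b] by (simp only:)
qed

lemma transfer_nil:
  assumes hf: "module_hom scale scale f"
    and invf: "\<And>k w. w \<in> G k \<Longrightarrow> f w \<in> G k"
    and invh: "\<And>k w. w \<in> G k \<Longrightarrow> h w \<in> G k"
    and df: "\<And>k w. w \<in> G k \<Longrightarrow> f w - h w \<in> G (Suc k)"
    and nh: "nilpotent_map h"
    and ln: "lie_nilpotent scale (\<lambda>x y. p x y - p y x)"
  shows "nilpotent_map f"
proof -
  obtain e where e: "h ^^ e = (\<lambda>_. 0)" using nh unfolding nilpotent_map_def by blast
  obtain n where n: "G n = {0}" using ln unfolding lie_nilpotent_def by blast
  have step: "(f ^^ e) w \<in> G (Suc k)" if "w \<in> G k" for w k
    using transfer_diff[OF hf invf invh df that, of e] e by simp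
  have "(f ^^ (e * c)) v \<in> G c" for c v
  proof (induction c)
    case 0 then show ?case by simp
  next
    case (Suc c)
    have "(f ^^ (e * Suc c)) v = (f ^^ e) ((f ^^ (e * c)) v)"
      by (simp only: mult_Suc_right funpow_add comp_apply)
    then show ?case using step[OF Suc.IH] by simp
  qed
  then have "(f ^^ (e * n)) = (\<lambda>_. 0)" using n by auto
  then show ?thesis unfolding nilpotent_map_def by blast
qed

lemma dir_b: 
  assumes "\<forall>x. nilpotent_map (p x)" "lie_nilpotent scale (\<lambda>x y. p x y - p y x)"
  shows "nilpotent_map (\<lambda>y. p y x)"
proof (rule transfer_nil[OF hR _ _ _ _ assms(2)])
  show "nilpotent_map (p x)" using assms(1) by blast
  show "w \<in> G k \<Longrightarrow> p w x \<in> G k" for w k by (rule lc_invR)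
  show "w \<in> G k \<Longrightarrow> p x w \<in> G k" for w k by (rule lc_invL)
  show "p w x - p x w \<in> G (Suc k)" if "w \<in> G k" for w k
  proof -
    have "p x w - p w x \<in> G (Suc k)" using that by (rule lc_ad)
    then have "- (p x w - p w x) \<in> G (Suc k)" using subspace_neg[OF lc_subspace] by blast
    then show ?thesis by simp
  qed
qed

lemma dir_a: 
  assumes "\<forall>x. nilpotent_map (\<lambda>y. p y x)" "lie_nilpotent scale (\<lambda>x y. p x y - p y x)"
  shows "nilpotent_map (p x)"
proof (rule transfer_nil[OF hL _ _ _ _ assms(2)])
  show "nilpotent_map (\<lambda>y. p y x)" using assms(1) by blast
  show "w \<in> G k \<Longrightarrow> p w x \<in> G k" for w k by (rule lc_invR)
  show "w \<in> G k \<Longrightarrow> p x w \<in> G k" for w k by (rule lc_invL)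
  show "p x w - p w x \<in> G (Suc k)" if "w \<in> G k" for w k using that by (rule lc_ad)
qed


lemma dir_c:
  assumes nL: "\<forall>x. nilpotent_map (p x)" and nR: "\<forall>x. nilpotent_map (\<lambda>y. p y x)"
  shows "lie_nilpotent scale (\<lambda>x y. p x y - p y x)"
proof -
  let ?Lf = "iter_img scale p"
  let ?Rf = "iter_img scale (\<lambda>x y. p y x)"
  have "\<exists>N. \<forall>n\<ge>N. ?Lf n = {0}"
  proof (rule iter_img_bound)
    show "\<forall>x. Vector_Spaces.linear scale scale (p x)" using hL module_hom_iff_linear by blast
    show "\<forall>u. Vector_Spaces.linear scale scale (\<lambda>x. p x u)" using hR module_hom_iff_linear by blast
    show "\<forall>x y. p x \<circ> p y = p y \<circ> p x" by (auto simp: fun_eq_iff lid)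
  qed (rule nL)
  then obtain N1 where N1: "\<forall>n\<ge>N1. ?Lf n = {0}" by blast
  have "\<exists>N. \<forall>n\<ge>N. ?Rf n = {0}"
  proof (rule iter_img_bound)
    show "\<forall>x. Vector_Spaces.linear scale scale (\<lambda>y. p y x)" using hR module_hom_iff_linear by blast
    show "\<forall>u. Vector_Spaces.linear scale scale (\<lambda>x. p u x)" using hL module_hom_iff_linear by blast
    show "\<forall>x y. (\<lambda>y. p y x) \<circ> (\<lambda>ya. p ya y) = (\<lambda>ya. p ya y) \<circ> (\<lambda>y. p y x)"
      by (auto simp: fun_eq_iff rid)
  qed (rule nR)
  then obtain N2 where N2: "\<forall>n\<ge>N2. ?Rf n = {0}" by blast
  define Gen where "Gen n = {p z w | z w i j. z \<in> ?Rf j \<and> w \<in> ?Lf i \<and> i + j + 1 = n}" for n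
  have incl: "G (Suc n) \<subseteq> span (Gen (Suc n))" for n
  proof (induction n)
    case 0
    have "{p x y - p y x | x y. y \<in> G 0} \<subseteq> span (Gen (Suc 0))"
    proof clarify
      fix x y
      have "p x y \<in> Gen (Suc 0)" unfolding Gen_def
        by (intro CollectI exI[of _ x] exI[of _ y] exI[of _ 0]) auto
      moreover have "p y x \<in> Gen (Suc 0)" unfolding Gen_def
        by (intro CollectI exI[of _ y] exI[of _ x] exI[of _ 0]) auto
      ultimately show "p x y - p y x \<in> span (Gen (Suc 0))" by (intro span_diff span_base)
    qed
    then show ?case by (simp only: lower_central.simps(2)) (rule span_minimal, simp_all)
  next
    case (Suc n)
    have g1: "p x u \<in> Gen (Suc (Suc n))" and g2: "p u x \<in> Gen (Suc (Suc n))" if hu: "u \<in> Gen (Suc n)" for x u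
    proof -
      obtain z w i j where u: "u = p z w" "z \<in> ?Rf j" "w \<in> ?Lf i" "i + j + 1 = Suc n"
        using hu unfolding Gen_def by blast
      have "p x u = p z (p x w)" using u lid by simp
      moreover have "p x w \<in> ?Lf (Suc i)" using u by (auto intro!: span_base)
      ultimately show "p x u \<in> Gen (Suc (Suc n))" unfolding Gen_def
        by (intro CollectI exI[of _ z] exI[of _ "p x w"] exI[of _ "Suc i"] exI[of _ j]) (use u in auto)
      have "p u x = p (p z x) w" using u rid by simp
      moreover have "p z x \<in> ?Rf (Suc j)" using u by (auto intro!: span_base)
      ultimately show "p u x \<in> Gen (Suc (Suc n))" unfolding Gen_def
        by (intro CollectI exI[of _ "p z x"] exI[of _ w] exI[of _ i] exI[of _ "Suc j"]) (use u in auto)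
    qed
    have "{p x y - p y x | x y. y \<in> G (Suc n)} \<subseteq> span (Gen (Suc (Suc n)))"
    proof clarify
      fix x y assume "y \<in> G (Suc n)"
      then have y: "y \<in> span (Gen (Suc n))" using Suc.IH by blast
      have "p x y \<in> p x ` span (Gen (Suc n))" using y by blast
      also have "\<dots> = span (p x ` Gen (Suc n))" using module_hom.span_image[OF hL, of x] by simp
      also have "\<dots> \<subseteq> span (Gen (Suc (Suc n)))" by (rule span_minimal) (use g1 in \<open>auto intro: span_base\<close>)
      finally have a: "p x y \<in> span (Gen (Suc (Suc n)))" .
      have "p y x \<in> (\<lambda>y. p y x) ` span (Gen (Suc n))" using y by blast
      also have "\<dots> = span ((\<lambda>y. p y x) ` Gen (Suc n))" using module_hom.span_image[OF hR, of x] by simp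
      also have "\<dots> \<subseteq> span (Gen (Suc (Suc n)))" by (rule span_minimal) (use g2 in \<open>auto intro: span_base\<close>)
      finally have b: "p y x \<in> span (Gen (Suc (Suc n)))" .
      show "p x y - p y x \<in> span (Gen (Suc (Suc n)))" using a b by (rule span_diff)
    qed
    then show ?case
      by (rule ord_eq_le_trans[OF lower_central.simps(2)[of scale _ "Suc n"] span_minimal]) simp
  qed
  have "Gen (Suc (N1 + N2)) \<subseteq> {0}"
  proof
    fix v assume "v \<in> Gen (Suc (N1 + N2))"
    then obtain z w i j where v: "v = p z w" "z \<in> ?Rf j" "w \<in> ?Lf i" "i + j + 1 = Suc (N1 + N2)"
      unfolding Gen_def by blast
    have "N1 \<le> i \<or> N2 \<le> j" using v(4) by linarith
    then have "w = 0 \<or> z = 0" using N1 N2 v by blast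
    then show "v \<in> {0}" using v module_hom.zero[OF hL] module_hom.zero[OF hR] by auto
  qed
  then have "span (Gen (Suc (N1 + N2))) \<subseteq> {0}" using span_minimal[OF _ subspace_single_0] by blast
  then have "G (Suc (N1 + N2)) \<subseteq> {0}" using incl by blast
  moreover have "0 \<in> G (Suc (N1 + N2))" by (rule subspace_0[OF lc_subspace])
  ultimately show ?thesis unfolding lie_nilpotent_def by blast
qed

end

end


theorem mainTheorem2:
  fixes scale :: "'k::field_char_0 \<Rightarrow> 'v::ab_group_add \<Rightarrow> 'v"
    and Basis :: "'v set"
    and p :: "'v \<Rightarrow> 'v \<Rightarrow> 'v"
  assumes fd: "finite_dimensional_vector_space scale Basis"
    and LR: "is_LR_product scale p"
  defines "br \<equiv> (\<lambda>x y. p x y - p y x)"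
  shows "((\<forall>x. nilpotent_map (p x)) \<and> (\<forall>x. nilpotent_map (\<lambda>y. p y x))
            \<longrightarrow> lie_nilpotent scale br)
       \<and> ((\<forall>x. nilpotent_map (p x)) \<and> lie_nilpotent scale br
            \<longrightarrow> (\<forall>x. nilpotent_map (\<lambda>y. p y x)))
       \<and> ((\<forall>x. nilpotent_map (\<lambda>y. p y x)) \<and> lie_nilpotent scale br
            \<longrightarrow> (\<forall>x. nilpotent_map (p x)))"
proof -
  interpret V: finite_dimensional_vector_space scale Basis by (rule fd)
  show ?thesis unfolding br_def
    using V.dir_a[OF LR] V.dir_b[OF LR] V.dir_c[OF LR] by blast
qed

end
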